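(* Let $\sigma$ be an anti-involution of $\mathcal D_{as}$, i.e. a $\mathbb C$-linear map with $\sigma^2=\mathrm{id}$ and $\sigma(XY)=\sigma(Y)\sigma(X)$ for all $X,Y$. Suppose $\sigma$ preserves the principal $\mathbb Z$-gradation. Then there is $b\in\mathbb C$ such that $\sigma$ is one of the following: (1) $\sigma_{-,b}$, defined by $\sigma_{-,b}(t)=-t$, $\sigma_{-,b}(D)=-D+b$; (2) $\sigma_{+,b}$, defined by $\sigma_{+,b}(t)=t$, $\sigma_{+,b}(D)=-D+b$.
   Context: $\mathcal D_{as}$ is the associative algebra of differential operators on the circle: it has basis $t^k D^l$ ($k\in\mathbb Z$, $l\in\mathbb Z_{\ge0}$), where $D=t\,\frac{d}{dt}$, with the relation $f(D)\,t^s=t^s f(D+s)$ for polynomials $f$. The principal $\mathbb Z$-gradation assigns degree $k$ to $t^k f(D)$. *)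

theory Defs
  imports "HOL-Computational_Algebra.Polynomial"
begin

text \<open>Model of D_as: an element sum_k t^k f_k(D) is the function k |-> f_k,
  a complex polynomial in D, with finite support.\<close>

definition dsupp :: "(int \<Rightarrow> complex poly) \<Rightarrow> int set" where
  "dsupp X = {k. X k \<noteq> 0}"

definition Das :: "(int \<Rightarrow> complex poly) set" where
  "Das = {X. finite (dsupp X)}"

definition dadd :: "(int \<Rightarrow> complex poly) \<Rightarrow> (int \<Rightarrow> complex poly) \<Rightarrow> (int \<Rightarrow> complex poly)" where
  "dadd X Y = (\<lambda>k. X k + Y k)"

definition dscale :: "complex \<Rightarrow> (int \<Rightarrow> complex poly) \<Rightarrow> (int \<Rightarrow> complex poly)" where
  "dscale c X = (\<lambda>k. smult c (X k))"

text \<open>(t^a f(D)) (t^b g(D)) = t^(a+b) f(D+b) g(D).\<close>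
definition dmult :: "(int \<Rightarrow> complex poly) \<Rightarrow> (int \<Rightarrow> complex poly) \<Rightarrow> (int \<Rightarrow> complex poly)" where
  "dmult X Y = (\<lambda>k. \<Sum>b\<in>dsupp Y. pcompose (X (k - b)) [:of_int b, 1:] * Y b)"

definition homog :: "int \<Rightarrow> (int \<Rightarrow> complex poly) \<Rightarrow> bool" where
  "homog k X \<longleftrightarrow> dsupp X \<subseteq> {k}"

definition anti_involution :: "((int \<Rightarrow> complex poly) \<Rightarrow> (int \<Rightarrow> complex poly)) \<Rightarrow> bool" where
  "anti_involution \<sigma> \<longleftrightarrow>
     (\<forall>X\<in>Das. \<sigma> X \<in> Das) \<and>
     (\<forall>X\<in>Das. \<forall>Y\<in>Das. \<sigma> (dadd X Y) = dadd (\<sigma> X) (\<sigma> Y)) \<and>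
     (\<forall>c. \<forall>X\<in>Das. \<sigma> (dscale c X) = dscale c (\<sigma> X)) \<and>
     (\<forall>X\<in>Das. \<sigma> (\<sigma> X) = X) \<and>
     (\<forall>X\<in>Das. \<forall>Y\<in>Das. \<sigma> (dmult X Y) = dmult (\<sigma> Y) (\<sigma> X))"

definition preserves_grading :: "((int \<Rightarrow> complex poly) \<Rightarrow> (int \<Rightarrow> complex poly)) \<Rightarrow> bool" where
  "preserves_grading \<sigma> \<longleftrightarrow> (\<forall>k. \<forall>X\<in>Das. homog k X \<longrightarrow> homog k (\<sigma> X))"

text \<open>The anti-involution with sigma(t) = s t, sigma(D) = -D + b (s = 1 or -1):
  sigma(t^k f(D)) = f(-D+b) (s t)^k = s^k t^k f(-D-k+b).\<close>
definition sigma_sb :: "complex \<Rightarrow> complex \<Rightarrow> (int \<Rightarrow> complex poly) \<Rightarrow> (int \<Rightarrow> complex poly)" where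
  "sigma_sb s b X = (\<lambda>k. smult (s powi k) (pcompose (X k) [:b - of_int k, -1:]))"

abbreviation sigma_minus :: "complex \<Rightarrow> (int \<Rightarrow> complex poly) \<Rightarrow> (int \<Rightarrow> complex poly)" where
  "sigma_minus b \<equiv> sigma_sb (-1) b"

abbreviation sigma_plus :: "complex \<Rightarrow> (int \<Rightarrow> complex poly) \<Rightarrow> (int \<Rightarrow> complex poly)" where
  "sigma_plus b \<equiv> sigma_sb 1 b"

end

theory Submission
  imports Defs
begin

definition dm :: "int \<Rightarrow> complex poly \<Rightarrow> (int \<Rightarrow> complex poly)" where
  "dm k f = (\<lambda>j. if j = k then f else 0)"

lemma dsupp_dm: "dsupp (dm k f) \<subseteq> {k}"
  by (auto simp: dsupp_def dm_def)

lemma dm_Das: "dm k f \<in> Das"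
  unfolding Das_def using dsupp_dm finite_subset by blast

lemma homog_dm: "homog k (dm k f)"
  by (simp add: homog_def dsupp_dm)

lemma homog_eq_dm: "homog k Y \<Longrightarrow> Y = dm k (Y k)"
  by (auto simp: homog_def dsupp_def dm_def fun_eq_iff)

lemma dmult_dm_right: "dmult X (dm b g) = (\<lambda>k. pcompose (X (k-b)) [:of_int b,1:] * g)"
proof (cases "g = 0")
  case True
  then have "dsupp (dm b g) = {}" by (auto simp: dsupp_def dm_def)
  then show ?thesis using True by (simp add: dmult_def)
next
  case False
  then have "dsupp (dm b g) = {b}" by (auto simp: dsupp_def dm_def)
  then show ?thesis by (simp add: dmult_def dm_def)
qed

lemma dmult_dm_dm: "dmult (dm a f) (dm b g) = dm (a+b) (pcompose f [:of_int b,1:] * g)"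
  unfolding dmult_dm_right by (auto simp: dm_def fun_eq_iff)

lemma pcompose_one[simp]: "pcompose 1 q = 1"
  by (metis one_pCons pcompose_const)

lemma dmult_one_left:
  assumes Y: "Y \<in> Das" shows "dmult (dm 0 1) Y = Y"
proof -
  have "(\<Sum>b\<in>dsupp Y. pcompose (dm 0 1 (k - b)) [:of_int b, 1:] * Y b) = Y k" for k
  proof -
    have "(\<Sum>b\<in>dsupp Y. pcompose (dm 0 1 (k - b)) [:of_int b, 1:] * Y b)
       = (\<Sum>b\<in>dsupp Y. if b = k then Y b else 0)"
      by (rule sum.cong) (auto simp: dm_def)
    also have "\<dots> = Y k"
      using Y by (subst sum.delta) (auto simp: Das_def dsupp_def)
    finally show ?thesis .
  qed
  then show ?thesis by (simp add: dmult_def fun_eq_iff)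
qed

lemma dmult_one_right: "dmult X (dm 0 1) = X"
  by (simp add: dmult_dm_right)

lemma sigma_sb_dm: "sigma_sb s b (dm k f) = dm k (smult (s powi k) (pcompose f [:b - of_int k, -1:]))"
  by (auto simp: sigma_sb_def dm_def fun_eq_iff)

lemma sigma_sb_add: "sigma_sb s b (dadd X Y) = dadd (sigma_sb s b X) (sigma_sb s b Y)"
  by (simp add: sigma_sb_def dadd_def pcompose_add fun_eq_iff smult_add_right)

lemma pCons_split: "pCons a (f::complex poly) = [:a:] + [:0,1:] * f"
  by (simp add: pcompose_pCons[of a f "[:0,1:]", simplified])

theorem mainTheorem1:
  fixes \<sigma> :: "(int \<Rightarrow> complex poly) \<Rightarrow> (int \<Rightarrow> complex poly)"
  assumes "anti_involution \<sigma>"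
    and "preserves_grading \<sigma>"
  shows "\<exists>b::complex. (\<forall>X\<in>Das. \<sigma> X = sigma_minus b X) \<or> (\<forall>X\<in>Das. \<sigma> X = sigma_plus b X)"
proof -
  have cl: "\<And>X. X \<in> Das \<Longrightarrow> \<sigma> X \<in> Das"
    and ad: "\<And>X Y. X \<in> Das \<Longrightarrow> Y \<in> Das \<Longrightarrow> \<sigma> (dadd X Y) = dadd (\<sigma> X) (\<sigma> Y)"
    and sc: "\<And>c X. X \<in> Das \<Longrightarrow> \<sigma> (dscale c X) = dscale c (\<sigma> X)"
    and inv: "\<And>X. X \<in> Das \<Longrightarrow> \<sigma> (\<sigma> X) = X"
    and mu: "\<And>X Y. X \<in> Das \<Longrightarrow> Y \<in> Das \<Longrightarrow> \<sigma> (dmult X Y) = dmult (\<sigma> Y) (\<sigma> X)"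
    using assms(1) unfolding anti_involution_def by blast+
  have hdm: "\<sigma> (dm k f) = dm k (\<sigma> (dm k f) k)" for k f
    using assms(2) dm_Das homog_dm homog_eq_dm unfolding preserves_grading_def by blast
  define u where "u = \<sigma> (dm 0 1)"
  have uD: "u \<in> Das" using cl dm_Das u_def by blast
  have "\<sigma> (dmult u (dm 0 1)) = dmult (\<sigma> (dm 0 1)) (\<sigma> u)" using mu uD dm_Das by blast
  also have "\<dots> = dmult u (dm 0 1)" using inv dm_Das u_def by simp
  finally have "\<sigma> u = u" by (simp add: dmult_one_right)
  then have s1: "\<sigma> (dm 0 1) = dm 0 1" using inv dm_Das u_def by simp
  define phi where "phi f = \<sigma> (dm 0 f) 0" for f
  have hP: "\<sigma> (dm 0 f) = dm 0 (phi f)" for f unfolding phi_def by (rule hdm)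
  have phi_add: "phi (f + g) = phi f + phi g" for f g
  proof -
    have "dm 0 (f+g) = dadd (dm 0 f) (dm 0 g)" by (auto simp: dm_def dadd_def)
    then have "\<sigma> (dm 0 (f+g)) = dadd (dm 0 (phi f)) (dm 0 (phi g))" using ad[OF dm_Das dm_Das] hP by simp
    then have "dm 0 (phi (f+g)) 0 = dadd (dm 0 (phi f)) (dm 0 (phi g)) 0" using hP by simp
    then show ?thesis by (simp add: dadd_def dm_def)
  qed
  have phi_mult: "phi (f * g) = phi f * phi g" for f g
  proof -
    have "dm 0 (f*g) = dmult (dm 0 f) (dm 0 g)" by (simp add: dmult_dm_dm)
    then have "\<sigma> (dm 0 (f*g)) = dmult (dm 0 (phi g)) (dm 0 (phi f))" using mu[OF dm_Das dm_Das] hP by simp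
    then have "dm 0 (phi (f*g)) 0 = dm 0 (phi g * phi f) 0" using hP by (simp add: dmult_dm_dm)
    then show ?thesis by (simp add: dm_def mult.commute)
  qed
  have phi_const: "phi [:c:] = [:c:]" for c
  proof -
    have "dm 0 [:c:] = dscale c (dm 0 1)" by (auto simp: dm_def dscale_def fun_eq_iff)
    then have "\<sigma> (dm 0 [:c:]) = dscale c (dm 0 1)" using sc[OF dm_Das] s1 by simp
    then show ?thesis by (simp add: phi_def dscale_def dm_def)
  qed
  define p where "p = phi [:0,1:]"
  have phi_comp: "phi f = pcompose f p" for f
  proof (induct f rule: pCons_induct)
    case 0
    then show ?case using phi_const[of 0] by simp
  next
    case (pCons a f)
    have "phi (pCons a f) = phi ([:a:] + [:0,1:] * f)" by (simp only: pCons_split[of a f])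
    also have "\<dots> = [:a:] + p * phi f" by (simp only: phi_add phi_mult phi_const p_def)
    finally show ?case using pCons(2) by (simp add: pcompose_pCons)
  qed
  have "pcompose p p = [:0,1:]"
  proof -
    have "dm 0 (phi (phi [:0,1:])) = dm 0 [:0,1:]" using inv[OF dm_Das, of 0 "[:0,1:]"] hP by simp
    then have "dm 0 (phi (phi [:0,1:])) 0 = dm 0 [:0,1:] 0" by (rule arg_cong)
    then have "phi (phi [:0,1:]) = [:0,1:]" by (simp add: dm_def)
    then have "phi p = [:0,1:]" by (simp only: p_def)
    then show ?thesis by (simp only: phi_comp)
  qed
  then have "degree (pcompose p p) = degree [:0::complex,1:]" by (rule arg_cong)
  then have "degree p * degree p = degree [:0::complex,1:]"
    by (simp only: degree_pcompose)
  moreover have "degree [:0::complex,1:] = 1" by simp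
  ultimately have "degree p * degree p = 1" by simp
  then have dp: "degree p = 1" by simp
  have pform: "p = [:coeff p 0, coeff p 1:]"
    by (rule poly_eqI) (auto simp: coeff_pCons dp intro: coeff_eq_0 split: nat.split)
  define b where "b = coeff p 0"
  define a where "a = coeff p 1"
  have pab: "p = [:b, a:]" using pform a_def b_def by simp
  define g where "g = \<sigma> (dm 1 1) 1"
  define h where "h = \<sigma> (dm (-1) 1) (-1)"
  have sT: "\<sigma> (dm 1 1) = dm 1 g" using hdm g_def by metis
  have sTi: "\<sigma> (dm (-1) 1) = dm (-1) h" using hdm h_def by metis
  have "dmult (dm (-1) 1) (dm 1 1) = dm 0 1" by (simp add: dmult_dm_dm)
  then have "dmult (dm 1 g) (dm (-1) h) = dm 0 1"
    using mu[OF dm_Das dm_Das, of "-1" 1 1 1] s1 sT sTi by simp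
  then have "dm 0 (pcompose g [:-1,1:] * h) 0 = dm 0 1 0" by (simp add: dmult_dm_dm)
  then have gh: "pcompose g [:-1,1:] * h = 1" by (simp add: dm_def)
  then have "g \<noteq> 0" "h \<noteq> 0" by auto
  have "degree (pcompose g [:-1,1:] * h) = 0" using gh by simp
  moreover have "pcompose g [:-1,1:] \<noteq> 0" using gh by auto
  ultimately have "degree (pcompose g [:-1,1:]) = 0"
    using \<open>h \<noteq> 0\<close> by (simp add: degree_mult_eq)
  then have "degree g = 0" by (simp add: degree_pcompose)
  define c where "c = coeff g 0"
  have gc: "g = [:c:]" using \<open>degree g = 0\<close> c_def degree_0_id by metis
  then have "c \<noteq> 0" using \<open>g \<noteq> 0\<close> by simp
  have "[:c:] * h = 1" using gh gc by simp
  then have "smult (inverse c) ([:c:] * h) = [:inverse c:]" by simp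
  then have hc: "h = [:inverse c:]" using \<open>c \<noteq> 0\<close> by simp
  have sD: "\<sigma> (dm 0 [:0,1:]) = dm 0 p" by (simp only: hP p_def)
  have s11: "\<sigma> (dm 0 [:1,1:]) = dm 0 (pcompose [:1,1:] p)" by (simp only: hP phi_comp)
  have "dmult (dm 0 [:0,1:]) (dm 1 1) = dmult (dm 1 1) (dm 0 [:1,1:])"
    by (simp add: dmult_dm_dm pcompose_pCons)
  then have "\<sigma> (dmult (dm 0 [:0,1:]) (dm 1 1)) = \<sigma> (dmult (dm 1 1) (dm 0 [:1,1:]))" by simp
  then have "dmult (dm 1 [:c:]) (dm 0 p) = dmult (dm 0 (pcompose [:1,1:] p)) (dm 1 [:c:])"
    using mu[OF dm_Das dm_Das] sD s11 sT gc by simp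
  then have "dm 1 ([:c:] * p) 1 = dm 1 (pcompose (pcompose [:1,1:] p) [:1,1:] * [:c:]) 1"
    by (simp add: dmult_dm_dm)
  then have "[:c:] * p = pcompose (pcompose [:1,1:] p) [:1,1:] * [:c:]" by (simp add: dm_def)
  then have "coeff ([:c:] * p) 0 = coeff (pcompose (pcompose [:1,1:] p) [:1,1:] * [:c:]) 0" by simp
  then have "c * b = (1 + b + a) * c" by (simp add: pab pcompose_pCons)
  then have "c * (1 + a) = 0" by (simp add: algebra_simps)
  then have "1 + a = 0" using \<open>c \<noteq> 0\<close> by simp
  then have "a = -1" by algebra
  then have pb: "p = [:b, -1:]" using pab by simp
  have "dm 1 [:c:] = dscale c (dm 1 1)"
    by (simp add: dm_def dscale_def fun_eq_iff)
  then have "\<sigma> (dm 1 [:c:]) = \<sigma> (dscale c (dm 1 1))" by simp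
  also have "\<dots> = dscale c (dm 1 [:c:])" using sc[OF dm_Das] sT gc by simp
  finally have "dm 1 1 = dscale c (dm 1 [:c:])" using inv[OF dm_Das, of 1 1] sT gc by simp
  then have "dm 1 1 1 = dscale c (dm 1 [:c:]) 1" by simp
  then have "[:c * c:] = 1" by (simp add: dm_def dscale_def)
  then have "c * c = 1" by (metis one_pCons pCons_eq_iff)
  then have c1: "c = 1 \<or> c = -1"
    by (metis (no_types, lifting) add.inverse_inverse mult_cancel_right mult_minus_left
        square_eq_iff mult_1)
  have ic: "inverse c = c" using c1 by auto
  have sTk: "\<sigma> (dm k 1) = dm k [:c powi k:]" for k
  proof (induct k rule: int_induct[where k=0])
    case base
    then show ?case using s1 by (simp add: one_pCons)
  next
    case (step1 i)
    have "dm (i+1) 1 = dmult (dm 1 1) (dm i 1)" by (simp add: dmult_dm_dm add.commute)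
    then have "\<sigma> (dm (i+1) 1) = dmult (dm i [:c powi i:]) (dm 1 [:c:])"
      using mu[OF dm_Das dm_Das] step1(2) sT gc by simp
    also have "\<dots> = dm (i+1) [:c powi i * c:]" by (simp add: dmult_dm_dm mult.commute)
    also have "c powi i * c = c powi (i+1)" using \<open>c \<noteq> 0\<close> by (simp add: power_int_add_1)
    finally show ?case .
  next
    case (step2 i)
    have "dm (i-1) 1 = dmult (dm (-1) 1) (dm i 1)" by (simp add: dmult_dm_dm)
    then have "\<sigma> (dm (i-1) 1) = dmult (dm i [:c powi i:]) (dm (-1) [:inverse c:])"
      using mu[OF dm_Das dm_Das] step2(2) sTi hc by simp
    also have "\<dots> = dm (i-1) [:c powi i * inverse c:]" by (simp add: dmult_dm_dm mult.commute)
    also have "c powi i * inverse c = c powi (i-1)" using \<open>c \<noteq> 0\<close>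
      by (simp add: power_int_add[of c i "-1", simplified])
    finally show ?case .
  qed
  have pk: "pcompose p [:of_int k, 1:] = [:b - of_int k, -1:]" for k
    by (simp add: pb pcompose_pCons)
  have sdm: "\<sigma> (dm k f) = sigma_sb c b (dm k f)" for k f
  proof -
    have "dm k f = dmult (dm k 1) (dm 0 f)" by (simp add: dmult_dm_dm)
    then have "\<sigma> (dm k f) = dmult (dm 0 (pcompose f p)) (dm k [:c powi k:])"
      using mu[OF dm_Das dm_Das] sTk hP phi_comp by simp
    also have "\<dots> = dm k (pcompose (pcompose f p) [:of_int k, 1:] * [:c powi k:])"
      by (simp add: dmult_dm_dm)
    also have "pcompose (pcompose f p) [:of_int k, 1:] = pcompose f [:b - of_int k, -1:]"
      by (simp add: pcompose_assoc[symmetric] pk)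
    finally show ?thesis by (simp add: sigma_sb_dm mult.commute)
  qed
  have zero: "\<sigma> (\<lambda>_. 0) = (\<lambda>_. 0)"
  proof -
    have "(\<lambda>_. 0) = dscale 0 (dm 0 1)" by (simp add: dscale_def)
    then show ?thesis using sc[OF dm_Das, of 0 0 1] by (simp add: dscale_def)
  qed
  have all: "\<forall>X. dsupp X = S \<longrightarrow> \<sigma> X = sigma_sb c b X" if "finite S" for S
    using that
  proof (induct S rule: finite_induct)
    case empty
    show ?case
    proof (intro allI impI)
      fix X assume "dsupp X = {}"
      then have "X = (\<lambda>_. 0)" by (auto simp: dsupp_def)
      then show "\<sigma> X = sigma_sb c b X" using zero by (simp add: sigma_sb_def)
    qed
  next
    case (insert k S)
    show ?case
    proof (intro allI impI)
      fix X assume X: "dsupp X = insert k S"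
      define Y where "Y = X(k := 0)"
      have Y: "dsupp Y = S" using X insert(2) by (auto simp: dsupp_def Y_def)
      have YD: "Y \<in> Das" using Y insert(1) by (simp add: Das_def)
      have XY: "X = dadd (dm k (X k)) Y" by (auto simp: dadd_def dm_def Y_def fun_eq_iff)
      have "\<sigma> X = dadd (sigma_sb c b (dm k (X k))) (sigma_sb c b Y)"
        using ad[OF dm_Das YD] XY sdm insert(3) Y by metis
      also have "\<dots> = sigma_sb c b X"
        by (metis XY sigma_sb_add)
      finally show "\<sigma> X = sigma_sb c b X" .
    qed
  qed
  have fin: "\<forall>X\<in>Das. \<sigma> X = sigma_sb c b X"
    using all by (auto simp: Das_def)
  show ?thesis
  proof (cases "c = 1")
    case True
    then show ?thesis using fin by blast
  next
    case False
    then have "c = -1" using c1 by simp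
    then show ?thesis using fin by blast
  qed
qed

end
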